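(* Let $A=\mathbb{Z}_{2^{m_1}}\times \mathbb{Z}_{2^{m_2}}\times\cdots\times\mathbb{Z}_{2^{m_k}}\times A_{2'}$, where $k\ge 1$, $m_i\ge 1$ for each $1\le i\le k$, and $A_{2'}$ is a finite abelian group of odd order. Let $H$ be a subgroup of $A$. Then $H$ is a subgroup perfect code of $A$ if and only if either $H$ is a subgroup isomorphic to $$\mathbb{Z}_{2^{m_1-1}}\times \mathbb{Z}_{2^{m_2-1}}\times\cdots\times\mathbb{Z}_{2^{m_k-1}}\times A_{2'},$$ or $H$ contains an element that is not a square in $A$.
   Context: All groups are finite abelian, written additively with identity $0$. An element $x$ of $A$ is a square if $x=2y$ for some $y\in A$; a subset of $A$ is square-free if it contains no squares. For a square-free subset $T\subseteq A$, the Cayley sum graph $\mathrm{CayS}(A,T)$ is the simple graph with vertex set $A$ in which two distinct vertices $x,y$ are adjacent iff $x+y\in T$. A subset $C$ of the vertex set of a graph is a perfect code if every vertex is at distance at most one from exactly one vertex of $C$. A subgroup $H$ of $A$ is a subgroup perfect code of $A$ if $H$ is a perfect code of $\mathrm{CayS}(A,T)$ for some square-free subset $T\subseteq A$ (the empty set allowed). *)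

theory Defs
  imports "HOL-Algebra.Algebra"
begin

text \<open>Abelian groups are HOL-Algebra groups (written multiplicatively: the paper's
  x + y is x \<otimes> y, 0 is \<one>, and 2y is y \<otimes> y).\<close>

definition is_square :: "('a, 'b) monoid_scheme \<Rightarrow> 'a \<Rightarrow> bool" where
  "is_square G x \<longleftrightarrow> (\<exists>y\<in>carrier G. x = y \<otimes>\<^bsub>G\<^esub> y)"

definition square_free :: "('a, 'b) monoid_scheme \<Rightarrow> 'a set \<Rightarrow> bool" where
  "square_free G T \<longleftrightarrow> (\<forall>x\<in>T. \<not> is_square G x)"

definition cays_adj :: "('a, 'b) monoid_scheme \<Rightarrow> 'a set \<Rightarrow> 'a \<Rightarrow> 'a \<Rightarrow> bool" where
  "cays_adj G T x y \<longleftrightarrow> x \<in> carrier G \<and> y \<in> carrier G \<and> x \<noteq> y \<and> x \<otimes>\<^bsub>G\<^esub> y \<in> T"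

definition cays_perfect_code :: "('a, 'b) monoid_scheme \<Rightarrow> 'a set \<Rightarrow> 'a set \<Rightarrow> bool" where
  "cays_perfect_code G T C \<longleftrightarrow> C \<subseteq> carrier G \<and>
     (\<forall>v\<in>carrier G. \<exists>!c. c \<in> C \<and> (v = c \<or> cays_adj G T v c))"

definition subgroup_perfect_code :: "('a, 'b) monoid_scheme \<Rightarrow> 'a set \<Rightarrow> bool" where
  "subgroup_perfect_code G H \<longleftrightarrow> subgroup H G \<and>
     (\<exists>T. T \<subseteq> carrier G \<and> square_free G T \<and> cays_perfect_code G T H)"

end

theory Submission
  imports Defs
begin


context comm_group
begin

lemma sq_mult: "y \<in> carrier G \<Longrightarrow> z \<in> carrier G \<Longrightarrow> (y \<otimes> y) \<otimes> (z \<otimes> z) = (y \<otimes> z) \<otimes> (y \<otimes> z)"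
  by (metis m_assoc m_closed m_comm)

lemma spc_nec:
  assumes "subgroup_perfect_code G H" "\<forall>h\<in>H. is_square G h"
  shows "H = {y \<otimes> y | y. y \<in> carrier G}"
proof -
  from assms(1) obtain T where sg: "subgroup H G" and T: "T \<subseteq> carrier G" "square_free G T" "cays_perfect_code G T H"
    unfolding subgroup_perfect_code_def by blast
  have "H \<subseteq> {y \<otimes> y | y. y \<in> carrier G}" using assms(2) unfolding is_square_def by blast
  moreover have "{y \<otimes> y | y. y \<in> carrier G} \<subseteq> H"
  proof
    fix s assume "s \<in> {y \<otimes> y | y. y \<in> carrier G}"
    then obtain y where y: "y \<in> carrier G" "s = y \<otimes> y" by blast
    show "s \<in> H"
    proof (rule ccontr)
      assume sH: "s \<notin> H"
      have "s \<in> carrier G" using y by simp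
      then obtain c where c: "c \<in> H" "s = c \<or> cays_adj G T s c"
        using T(3) unfolding cays_perfect_code_def by blast
      then have "s \<otimes> c \<in> T" using sH unfolding cays_adj_def by auto
      moreover obtain z where z: "z \<in> carrier G" "c = z \<otimes> z" using assms(2) c(1) unfolding is_square_def by blast
      ultimately have "(y \<otimes> z) \<otimes> (y \<otimes> z) \<in> T" using sq_mult[OF y(1) z(1)] y(2) by simp
      then show False using T(2) y z unfolding square_free_def is_square_def by blast
    qed
  qed
  ultimately show ?thesis by blast
qed

lemma spc_suff:
  assumes sg: "subgroup H G" and ex: "\<forall>x\<in>carrier G - H. \<exists>z\<in>H #> x. \<not> is_square G z"
  shows "subgroup_perfect_code G H"
proof -
  define f where "f Y = (SOME z. z \<in> Y \<and> \<not> is_square G z)" for Y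
  have f: "f (H #> x) \<in> H #> x \<and> \<not> is_square G (f (H #> x))" if "x \<in> carrier G - H" for x
    unfolding f_def using someI_ex[OF ex[rule_format, OF that, unfolded Bex_def]] .
  have Hc: "H \<subseteq> carrier G" using sg subgroup.subset by blast
  have cosc: "H #> x \<subseteq> carrier G" if "x \<in> carrier G" for x
    using that Hc unfolding r_coset_def by auto
  have fnH: "f (H #> x) \<notin> H" if "x \<in> carrier G - H" for x
  proof
    assume a: "f (H #> x) \<in> H"
    have "H #> x = H #> f (H #> x)" using repr_independence f that sg by blast
    also have "\<dots> = H" using a sg by (simp add: coset_join2 subgroup.mem_carrier)
    finally show False using rcos_self[of x H] that sg by auto
  qed
  define T where "T = (\<lambda>x. f (H #> x)) ` (carrier G - H)"
  have TC: "T \<subseteq> carrier G" unfolding T_def using f cosc by blast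
  have TH: "T \<inter> H = {}" unfolding T_def using fnH by blast
  have sf: "square_free G T" unfolding square_free_def T_def using f by blast
  have pc: "cays_perfect_code G T H"
    unfolding cays_perfect_code_def
  proof (intro conjI Hc ballI)
    fix v assume v: "v \<in> carrier G"
    show "\<exists>!c. c \<in> H \<and> (v = c \<or> cays_adj G T v c)"
    proof (cases "v \<in> H")
      case True
      have "c = v" if "c \<in> H" "v = c \<or> cays_adj G T v c" for c
      proof -
        have vc: "v \<otimes> c \<in> H" using subgroup.m_closed[OF sg True that(1)] .
        have "\<not> cays_adj G T v c" unfolding cays_adj_def using vc TH by blast
        then show ?thesis using that(2) by blast
      qed
      then show ?thesis using True by blast
    next
      case False
      hence vv: "v \<in> carrier G - H" using v by blast
      obtain h where h: "h \<in> H" "f (H #> v) = h \<otimes> v" using f[OF vv] unfolding r_coset_def by blast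
      have hc: "h \<in> carrier G" using h Hc by blast
      have ex1: "h \<in> H \<and> (v = h \<or> cays_adj G T v h)"
      proof -
        have "v \<otimes> h = f (H #> v)" using h hc v m_comm by simp
        hence "v \<otimes> h \<in> T" unfolding T_def using vv by blast
        then show ?thesis using h False hc v unfolding cays_adj_def by auto
      qed
      have un: "c = h" if "c \<in> H" "v = c \<or> cays_adj G T v c" for c
      proof -
        have cc: "c \<in> carrier G" using that Hc by blast
        have "v \<otimes> c \<in> T" using that False unfolding cays_adj_def by auto
        then obtain x where x: "x \<in> carrier G - H" "v \<otimes> c = f (H #> x)" unfolding T_def by blast
        have "v \<otimes> c = c \<otimes> v" using cc v m_comm by simp
        hence "v \<otimes> c \<in> H #> v" using that(1) unfolding r_coset_def by blast
        hence "H #> v = H #> (v \<otimes> c)" using repr_independence v sg by blast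
        also have "\<dots> = H #> x" using repr_independence[of "v \<otimes> c" H x] x f sg by auto
        finally have "v \<otimes> c = f (H #> v)" using x(2) by simp
        hence "v \<otimes> c = v \<otimes> h" using h hc v m_comm by simp
        then show ?thesis using cc hc v by simp
      qed
      show ?thesis using ex1 un by blast
    qed
  qed
  show ?thesis unfolding subgroup_perfect_code_def using sg TC sf pc by blast
qed

lemma spc_iff:
  assumes sg: "subgroup H G"
  shows "subgroup_perfect_code G H \<longleftrightarrow> H = {y \<otimes> y | y. y \<in> carrier G} \<or> (\<exists>h\<in>H. \<not> is_square G h)"
proof
  assume "subgroup_perfect_code G H" then show "H = {y \<otimes> y | y. y \<in> carrier G} \<or> (\<exists>h\<in>H. \<not> is_square G h)"
    using spc_nec by blast
next
  assume a: "H = {y \<otimes> y | y. y \<in> carrier G} \<or> (\<exists>h\<in>H. \<not> is_square G h)"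
  have Hc: "H \<subseteq> carrier G" using sg subgroup.subset by blast
  show "subgroup_perfect_code G H"
  proof (rule spc_suff[OF sg], rule ballI)
    fix x assume x: "x \<in> carrier G - H"
    show "\<exists>z\<in>H #> x. \<not> is_square G z"
    proof (cases "H = {y \<otimes> y | y. y \<in> carrier G}")
      case True
      then show ?thesis using x rcos_self[of x H] sg unfolding is_square_def by blast
    next
      case False
      then obtain h0 where h0: "h0 \<in> H" "\<not> is_square G h0" using a by blast
      have h0c: "h0 \<in> carrier G" using h0 Hc by blast
      show ?thesis
      proof (cases "is_square G x")
        case False then show ?thesis using x rcos_self[of x H] sg by blast
      next
        case True
        then obtain y where y: "y \<in> carrier G" "x = y \<otimes> y" unfolding is_square_def by blast
        have in1: "h0 \<otimes> x \<in> H #> x" using h0 unfolding r_coset_def by blast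
        have "\<not> is_square G (h0 \<otimes> x)"
        proof
          assume "is_square G (h0 \<otimes> x)"
          then obtain z where z: "z \<in> carrier G" "h0 \<otimes> x = z \<otimes> z" unfolding is_square_def by blast
          have "h0 = (z \<otimes> z) \<otimes> (inv y \<otimes> inv y)"
            using z y h0c by (metis inv_mult_group m_closed inv_closed r_inv r_one m_assoc)
          also have "\<dots> = (z \<otimes> inv y) \<otimes> (z \<otimes> inv y)" using sq_mult[OF z(1) inv_closed[OF y(1)]] .
          finally show False using h0 z y unfolding is_square_def by blast
        qed
        then show ?thesis using in1 by blast
      qed
    qed
  qed
qed

end


lemma L1:
  assumes "(n::nat) \<ge> 1"
  shows "(2 * (a mod 2^(n-1))) mod (2^n::int) = (2*a) mod 2^n"
proof -
  have e: "(2::int)^n = 2 * 2^(n-1)" using assms by (cases n) auto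
  have "2 * (a mod 2^(n-1)) = (2*a) mod (2 * 2^(n-1))" by (simp add: mod_mult_mult1)
  then show ?thesis unfolding e by simp
qed

lemma odd_sq_inj:
  assumes "group B" "finite (carrier B)" "odd (order B)"
    and b: "b \<in> carrier B" and c: "c \<in> carrier B" and eq: "b \<otimes>\<^bsub>B\<^esub> b = c \<otimes>\<^bsub>B\<^esub> c"
    and comm: "comm_group B"
  shows "b = c"
proof -
  interpret comm_group B by fact
  define z where "z = b \<otimes>\<^bsub>B\<^esub> inv\<^bsub>B\<^esub> c"
  have zc: "z \<in> carrier B" unfolding z_def using b c by simp
  have "z \<otimes>\<^bsub>B\<^esub> z = (b \<otimes>\<^bsub>B\<^esub> b) \<otimes>\<^bsub>B\<^esub> (inv\<^bsub>B\<^esub> c \<otimes>\<^bsub>B\<^esub> inv\<^bsub>B\<^esub> c)"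
    unfolding z_def using sq_mult[OF b inv_closed[OF c]] by simp
  also have "\<dots> = (c \<otimes>\<^bsub>B\<^esub> inv\<^bsub>B\<^esub> c) \<otimes>\<^bsub>B\<^esub> (c \<otimes>\<^bsub>B\<^esub> inv\<^bsub>B\<^esub> c)"
    using eq sq_mult[OF c inv_closed[OF c]] by simp
  also have "\<dots> = \<one>\<^bsub>B\<^esub>" using c by simp
  finally have z2: "z \<otimes>\<^bsub>B\<^esub> z = \<one>\<^bsub>B\<^esub>" .
  obtain q where q: "order B = 2*q+1" using assms(3) oddE by blast
  have "z [^]\<^bsub>B\<^esub> order B = \<one>\<^bsub>B\<^esub>" using pow_order_eq_1 assms(2) zc by blast
  moreover have "z [^]\<^bsub>B\<^esub> (2*q+1) = z"
  proof -
    have "z [^]\<^bsub>B\<^esub> (2*q) = (z [^]\<^bsub>B\<^esub> (2::nat)) [^]\<^bsub>B\<^esub> q" using zc by (simp add: nat_pow_pow mult.commute)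
    also have "\<dots> = \<one>\<^bsub>B\<^esub>" using z2 zc by (simp add: numeral_2_eq_2)
    finally show ?thesis using zc by (simp add: nat_pow_Suc)
  qed
  ultimately have "z = \<one>\<^bsub>B\<^esub>" using q by simp
  then have "inv\<^bsub>B\<^esub> (inv\<^bsub>B\<^esub> c) = b" unfolding z_def using b c by (intro inv_equality) auto
  then show ?thesis using c by simp
qed

lemma carrier_Z: "carrier (integer_mod_group (2^n)) = {0..<2^n}"
  by (simp add: carrier_integer_mod_group)

lemma mult_Z: "x \<otimes>\<^bsub>integer_mod_group (2^n)\<^esub> y = (x + y) mod 2^n"
  by simp

locale twoparts =
  fixes I :: "nat set" and m :: "nat \<Rightarrow> nat" and B :: "('b, 'c) monoid_scheme"
  assumes mge: "\<forall>i\<in>I. m i \<ge> 1" and finI: "finite I"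
    and cgB: "comm_group B" and finB: "finite (carrier B)" and oddB: "odd (order B)"
begin

abbreviation "A \<equiv> DirProd (product_group I (\<lambda>i. integer_mod_group (2 ^ m i))) B"
abbreviation "D \<equiv> DirProd (product_group I (\<lambda>i. integer_mod_group (2 ^ (m i - 1)))) B"

lemma grB: "group B" using cgB comm_group.axioms(2) by blast

lemma grA: "group A" by (rule DirProd_group) (auto simp: grB)
lemma grD: "group D" by (rule DirProd_group) (auto simp: grB)

lemma carrA: "carrier A = (\<Pi>\<^sub>E i\<in>I. {0..<2^m i}) \<times> carrier B"
  by (simp add: carrier_Z)
lemma carrD: "carrier D = (\<Pi>\<^sub>E i\<in>I. {0..<2^(m i - 1)}) \<times> carrier B"
  by (simp add: carrier_Z)

lemma multA: "(x, b) \<otimes>\<^bsub>A\<^esub> (y, c) = ((\<lambda>i\<in>I. (x i + y i) mod 2^m i), b \<otimes>\<^bsub>B\<^esub> c)"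
  by simp
lemma multD: "(x, b) \<otimes>\<^bsub>D\<^esub> (y, c) = ((\<lambda>i\<in>I. (x i + y i) mod 2^(m i - 1)), b \<otimes>\<^bsub>B\<^esub> c)"
  by simp

lemma cgA: "comm_group A"
proof (rule group.group_comm_groupI[OF grA])
  fix u v assume "u \<in> carrier A" "v \<in> carrier A"
  then obtain x b y c where u: "u = (x, b)" "b \<in> carrier B" and v: "v = (y, c)" "c \<in> carrier B" by auto
  have "b \<otimes>\<^bsub>B\<^esub> c = c \<otimes>\<^bsub>B\<^esub> b" using u v cgB by (simp add: comm_groupE(4))
  then show "u \<otimes>\<^bsub>A\<^esub> v = v \<otimes>\<^bsub>A\<^esub> u" unfolding u v multA by (simp add: add.commute)
qed

lemma finA: "finite (carrier A)"
  unfolding carrA using finI finB by (simp add: finite_PiE)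

lemma subDA: "carrier D \<subseteq> carrier A"
proof -
  have "{0..<(2::int)^(m i - 1)} \<subseteq> {0..<2^m i}" for i
  proof -
    have "(2::int)^(m i - 1) \<le> 2^m i" by (rule power_increasing) auto
    then show ?thesis by auto
  qed
  then have "(\<Pi>\<^sub>E i\<in>I. {0..<(2::int)^(m i - 1)}) \<subseteq> (\<Pi>\<^sub>E i\<in>I. {0..<2^m i})" by (rule PiE_mono)
  then show ?thesis unfolding carrA carrD by (rule Sigma_mono) simp
qed

definition red :: "(nat \<Rightarrow> int) \<times> 'b \<Rightarrow> (nat \<Rightarrow> int) \<times> 'b" where
  "red z = ((\<lambda>i\<in>I. fst z i mod 2^(m i - 1)), snd z)"

lemma red_carr: "z \<in> carrier A \<Longrightarrow> red z \<in> carrier D"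
  unfolding red_def carrA carrD by (auto simp: PiE_iff)

lemma red_sq: assumes "z \<in> carrier A" shows "red z \<otimes>\<^bsub>A\<^esub> red z = z \<otimes>\<^bsub>A\<^esub> z"
proof -
  obtain x b where z: "z = (x, b)" by (cases z)
  have "(x i mod 2^(m i - 1) + x i mod 2^(m i - 1)) mod 2^m i = (x i + x i) mod 2^m i" if "i \<in> I" for i
    using L1[of "m i" "x i", OF mge[rule_format, OF that]] by (simp only: mult_2)
  then show ?thesis unfolding z red_def multA by (auto intro!: restrict_ext)
qed

lemma red_mult: assumes "x \<in> carrier D" "y \<in> carrier D" shows "x \<otimes>\<^bsub>D\<^esub> y = red (x \<otimes>\<^bsub>A\<^esub> y)"
proof -
  obtain x1 b where x: "x = (x1, b)" by (cases x)
  obtain y1 c where y: "y = (y1, c)" by (cases y)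
  have "(a mod 2^m i) mod 2^(m i - 1) = a mod (2^(m i - 1)::int)" for a i
    by (rule mod_mod_cancel) (simp add: le_imp_power_dvd)
  then show ?thesis unfolding x y red_def multA multD by (auto intro!: restrict_ext)
qed

definition Sq where "Sq = {y \<otimes>\<^bsub>A\<^esub> y | y. y \<in> carrier A}"

lemma iso_DSq: "D \<cong> A\<lparr>carrier := Sq\<rparr>"
proof -
  interpret cA: comm_group A by (rule cgA)
  define \<phi> where "\<phi> y = y \<otimes>\<^bsub>A\<^esub> y" for y
  have hom: "\<phi> \<in> hom D (A\<lparr>carrier := Sq\<rparr>)"
  proof (rule homI)
    fix x assume "x \<in> carrier D"
    then have "x \<in> carrier A" using subDA by blast
    then have "\<phi> x \<in> Sq" unfolding \<phi>_def Sq_def by blast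
    then show "\<phi> x \<in> carrier (A\<lparr>carrier := Sq\<rparr>)" by simp
  next
    fix x y assume xy: "x \<in> carrier D" "y \<in> carrier D"
    then have xyA: "x \<in> carrier A" "y \<in> carrier A" using subDA by auto
    have "\<phi> (x \<otimes>\<^bsub>D\<^esub> y) = (x \<otimes>\<^bsub>A\<^esub> y) \<otimes>\<^bsub>A\<^esub> (x \<otimes>\<^bsub>A\<^esub> y)"
      unfolding \<phi>_def red_mult[OF xy] using red_sq[OF cA.m_closed[OF xyA]] .
    also have "\<dots> = \<phi> x \<otimes>\<^bsub>A\<^esub> \<phi> y" unfolding \<phi>_def using cA.sq_mult[OF xyA] by simp
    finally show "\<phi> (x \<otimes>\<^bsub>D\<^esub> y) = \<phi> x \<otimes>\<^bsub>A\<lparr>carrier := Sq\<rparr>\<^esub> \<phi> y" by simp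
  qed
  have inj: "inj_on \<phi> (carrier D)"
  proof (rule inj_onI)
    fix u v assume u: "u \<in> carrier D" and v: "v \<in> carrier D" and e: "\<phi> u = \<phi> v"
    obtain x b where uu: "u = (x, b)" by (cases u)
    obtain y c where vv: "v = (y, c)" by (cases v)
    have x: "x \<in> (\<Pi>\<^sub>E i\<in>I. {0..<2^(m i - 1)})" "b \<in> carrier B" using u uu carrD by auto
    have y: "y \<in> (\<Pi>\<^sub>E i\<in>I. {0..<2^(m i - 1)})" "c \<in> carrier B" using v vv carrD by auto
    have e1: "(\<lambda>i\<in>I. (x i + x i) mod 2^m i) = (\<lambda>i\<in>I. (y i + y i) mod 2^m i)"
      and e2: "b \<otimes>\<^bsub>B\<^esub> b = c \<otimes>\<^bsub>B\<^esub> c" using e unfolding \<phi>_def uu vv multA by auto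
    have "b = c" using odd_sq_inj[OF grB finB oddB x(2) y(2) e2 cgB] .
    moreover have "x = y"
    proof (rule PiE_ext[OF x(1) y(1)])
      fix i assume i: "i \<in> I"
      have "(x i + x i) mod 2^m i = (y i + y i) mod 2^m i" using fun_cong[OF e1, of i] i by simp
      moreover have "2 * (2::int)^(m i - 1) = 2^m i" using mge i by (cases "m i") auto
      moreover have "0 \<le> x i" "x i < 2^(m i - 1)" "0 \<le> y i" "y i < 2^(m i - 1)" using x(1) y(1) i by auto
      ultimately show "x i = y i" by simp
    qed
    ultimately show "u = v" using uu vv by simp
  qed
  have img: "\<phi> ` carrier D = Sq"
  proof
    show "\<phi> ` carrier D \<subseteq> Sq" unfolding \<phi>_def Sq_def using subDA by blast
    show "Sq \<subseteq> \<phi> ` carrier D"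
    proof
      fix s assume "s \<in> Sq"
      then obtain z where z: "z \<in> carrier A" "s = z \<otimes>\<^bsub>A\<^esub> z" unfolding Sq_def by blast
      have "s = \<phi> (red z)" unfolding \<phi>_def using red_sq z by simp
      then show "s \<in> \<phi> ` carrier D" using red_carr z by blast
    qed
  qed
  have "\<phi> \<in> iso D (A\<lparr>carrier := Sq\<rparr>)" unfolding iso_def bij_betw_def using hom inj img by simp
  then show ?thesis unfolding is_iso_def by blast
qed

end


theorem theorem3p1:
  fixes k :: nat and m :: "nat \<Rightarrow> nat" and B :: "('b, 'c) monoid_scheme" and H
  assumes "k \<ge> 1"
    and "\<forall>i\<in>{1..k}. m i \<ge> 1"
    and "comm_group B" and "finite (carrier B)" and "odd (order B)"
    and "subgroup H (DirProd (product_group {1..k} (\<lambda>i. integer_mod_group (2 ^ m i))) B)"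
  shows "subgroup_perfect_code
           (DirProd (product_group {1..k} (\<lambda>i. integer_mod_group (2 ^ m i))) B) H
         \<longleftrightarrow>
         ((DirProd (product_group {1..k} (\<lambda>i. integer_mod_group (2 ^ m i))) B)\<lparr>carrier := H\<rparr>
            \<cong> DirProd (product_group {1..k} (\<lambda>i. integer_mod_group (2 ^ (m i - 1)))) B)
         \<or> (\<exists>h\<in>H. \<not> is_square
                (DirProd (product_group {1..k} (\<lambda>i. integer_mod_group (2 ^ m i))) B) h)"
proof -
  interpret T: twoparts "{1..k}" m B
    unfolding twoparts_def using assms(2-5) by simp
  interpret cA: comm_group T.A by (rule T.cgA)
  have sp: "subgroup_perfect_code T.A H \<longleftrightarrow> H = T.Sq \<or> (\<exists>h\<in>H. \<not> is_square T.A h)"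
    unfolding T.Sq_def by (rule cA.spc_iff[OF assms(6)])
  show ?thesis
  proof (cases "\<exists>h\<in>H. \<not> is_square T.A h")
    case True
    then show ?thesis using sp by blast
  next
    case False
    then have HS: "H \<subseteq> T.Sq" unfolding T.Sq_def is_square_def by blast
    have finS: "finite T.Sq" using T.finA unfolding T.Sq_def
      by (rule rev_finite_subset) blast
    have "H = T.Sq \<longleftrightarrow> T.A\<lparr>carrier := H\<rparr> \<cong> T.D"
    proof
      assume "H = T.Sq"
      then show "T.A\<lparr>carrier := H\<rparr> \<cong> T.D" using group.iso_sym[OF T.grD T.iso_DSq] by simp
    next
      assume "T.A\<lparr>carrier := H\<rparr> \<cong> T.D"
      then have "card H = card (carrier T.D)" using iso_same_card by fastforce
      also have "\<dots> = card T.Sq" using iso_same_card[OF T.iso_DSq] by simp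
      finally show "H = T.Sq" using card_subset_eq[OF finS HS] by simp
    qed
    then show ?thesis using sp False by blast
  qed
qed

end
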